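(* Let $S$ be the group $\mathbb{Z}/2$, viewed as a semigroup. The category $\mathbf{OI}_{++ep}/N(S)$ is Gröbner.
   Context: Gröbner categories. Let $\mathcal{C}$ be a small category and $c$ an object. An admissible order on the morphisms out of $c$ is a choice, for every object $c'$, of a well-order $\preceq_{c'}$ on $\mathrm{Hom}(c,c')$ such that $f\prec_{c'} f'$ implies $g\circ f\prec_{c''} g\circ f'$ for all $g:c'\to c''$. On morphisms out of $c$ put the preorder $f\le g$ iff $g=h\circ f$ for some $h$; $|c/\mathcal{C}|$ is the associated poset. A poset is Noetherian if every sequence $x_1,x_2,\dots$ has $i<j$ with $x_i\le x_j$. $\mathcal{C}$ is Gröbner if for every object $c$: (G1) morphisms out of $c$ admit an admissible order, and (G2) $|c/\mathcal{C}|$ is Noetherian. $\mathbf{OI}_{++ep}$ is the category of finite ordinals $[n]=\{0<1<\dots<n\}$ with $n\ge1$ and order-preserving injections preserving both endpoints. $N(S)$ assigns $S^n$ to $[n]$, and for such $\varphi:[n]\to[m]$, $N(S)(\varphi)(t_1,\dots,t_m)=(s_1,\dots,s_n)$ with $s_i=t_{\varphi(i-1)+1}\cdots t_{\varphi(i)}$. $\mathbf{OI}_{++ep}/N(S)$ is its category of elements: objects are non-empty finite sequences $(s_1,\dots,s_n)$ in $S$; a morphism $(s_1,\dots,s_n)\to(t_1,\dots,t_m)$ is an endpoint-preserving injection $\varphi:[n]\to[m]$ with $N(S)(\varphi)(t_1,\dots,t_m)=(s_1,\dots,s_n)$. *)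

theory Defs
  imports Main "HOL-Library.Numeral_Type"
begin

text \<open>A small category is presented by a set of objects Ob, hom-sets Hom a b, and
  composition cmp g f (meaning g after f).\<close>

definition admissible_order ::
  "'o set \<Rightarrow> ('o \<Rightarrow> 'o \<Rightarrow> 'm set) \<Rightarrow> ('m \<Rightarrow> 'm \<Rightarrow> 'm) \<Rightarrow> 'o \<Rightarrow> ('o \<Rightarrow> 'm rel) \<Rightarrow> bool" where
  "admissible_order Ob Hom cmp c R \<longleftrightarrow>
     (\<forall>c'\<in>Ob. well_order_on (Hom c c') (R c')) \<and>
     (\<forall>c'\<in>Ob. \<forall>c''\<in>Ob. \<forall>f\<in>Hom c c'. \<forall>f'\<in>Hom c c'. \<forall>g\<in>Hom c' c''.
        ((f, f') \<in> R c' \<and> f \<noteq> f') \<longrightarrow>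
        ((cmp g f, cmp g f') \<in> R c'' \<and> cmp g f \<noteq> cmp g f'))"

definition out_mor :: "'o set \<Rightarrow> ('o \<Rightarrow> 'o \<Rightarrow> 'm set) \<Rightarrow> 'o \<Rightarrow> ('o \<times> 'm) set" where
  "out_mor Ob Hom c = {(c', f). c' \<in> Ob \<and> f \<in> Hom c c'}"

definition under_le :: "('o \<Rightarrow> 'o \<Rightarrow> 'm set) \<Rightarrow> ('m \<Rightarrow> 'm \<Rightarrow> 'm) \<Rightarrow> 'o \<times> 'm \<Rightarrow> 'o \<times> 'm \<Rightarrow> bool" where
  "under_le Hom cmp x y \<longleftrightarrow> (\<exists>h\<in>Hom (fst x) (fst y). snd y = cmp h (snd x))"

definition noetherian_on :: "'a set \<Rightarrow> ('a \<Rightarrow> 'a \<Rightarrow> bool) \<Rightarrow> bool" where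
  "noetherian_on A le \<longleftrightarrow> (\<forall>x::nat \<Rightarrow> 'a. (\<forall>i. x i \<in> A) \<longrightarrow> (\<exists>i j. i < j \<and> le (x i) (x j)))"

definition groebner_cat :: "'o set \<Rightarrow> ('o \<Rightarrow> 'o \<Rightarrow> 'm set) \<Rightarrow> ('m \<Rightarrow> 'm \<Rightarrow> 'm) \<Rightarrow> bool" where
  "groebner_cat Ob Hom cmp \<longleftrightarrow>
     (\<forall>c\<in>Ob. (\<exists>R. admissible_order Ob Hom cmp c R) \<and>
              noetherian_on (out_mor Ob Hom c) (under_le Hom cmp))"

text \<open>Objects: non-empty lists (s_1,...,s_n) (list index i-1 holds s_i).
  A morphism s \<rightarrow> t (n = length s, m = length t) is an order-preserving injection
  \<phi> : [n] \<rightarrow> [m] preserving both endpoints, encoded as the list [\<phi> 0, ..., \<phi> n],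
  such that s_i = t_{\<phi>(i-1)+1} \<cdots> t_{\<phi>(i)} for 1 \<le> i \<le> n.
  The semigroup S is written additively (Z/2 is abelian); the segment products are
  over non-empty segments, so only the semigroup structure matters.\<close>

definition seg_sum :: "'a::monoid_add list \<Rightarrow> nat \<Rightarrow> nat \<Rightarrow> 'a" where
  "seg_sum t a b = sum_list (take (b - a) (drop a t))"   \<comment> \<open>t_{a+1} + ... + t_b\<close>

definition elt_obj :: "'a list set" where
  "elt_obj = {s. s \<noteq> []}"

definition elt_hom :: "'a::monoid_add list \<Rightarrow> 'a list \<Rightarrow> nat list set" where
  "elt_hom s t = {phi. length phi = Suc (length s) \<and> sorted_wrt (<) phi \<and>
                      phi ! 0 = 0 \<and> phi ! length s = length t \<and>
                      (\<forall>i < length s. s ! i = seg_sum t (phi ! i) (phi ! Suc i))}"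

definition elt_comp :: "nat list \<Rightarrow> nat list \<Rightarrow> nat list" where
  "elt_comp g f = map (\<lambda>i. g ! i) f"

end

theory Submission
  imports Defs "HOL-Library.Sublist" "HOL-Library.Infinite_Set" "HOL-Library.List_Lexorder"
begin

lemma higman:
  fixes A :: "'a set" and f :: "nat \<Rightarrow> 'a list"
  assumes finA: "finite A" and fA: "\<And>i. f i \<in> lists A"
  shows "\<exists>i j. i < j \<and> subseq (f i) (f j)"
proof (rule ccontr)
  assume nf: "\<not> ?thesis"
  define bad where "bad g \<longleftrightarrow> (\<forall>i. g i \<in> lists A) \<and> (\<forall>i j. i < j \<longrightarrow> \<not> subseq (g i) (g j))"
    for g :: "nat \<Rightarrow> 'a list"
  define ext where "ext xs \<longleftrightarrow> (\<exists>g. bad g \<and> (\<forall>i<length xs. g i = xs ! i))" for xs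
  define nxt where "nxt xs = (SOME w. ext (xs @ [w]) \<and> (\<forall>w'. ext (xs @ [w']) \<longrightarrow> length w \<le> length w'))" for xs
  have nxt: "ext (xs @ [nxt xs]) \<and> (\<forall>w'. ext (xs @ [w']) \<longrightarrow> length (nxt xs) \<le> length w')"
    if "ext xs" for xs
  proof -
    from that obtain g where g: "bad g" "\<forall>i<length xs. g i = xs ! i" unfolding ext_def by blast
    have "ext (xs @ [g (length xs)])" unfolding ext_def
      using g by (intro exI[of _ g]) (auto simp: nth_append less_Suc_eq)
    then have "\<exists>w. ext (xs @ [w]) \<and> (\<forall>w'. ext (xs @ [w']) \<longrightarrow> length w \<le> length w')"
      by (rule ex_has_least_nat)
    then show ?thesis unfolding nxt_def by (rule someI_ex)
  qed
  define P where "P n = rec_nat [] (\<lambda>n xs. xs @ [nxt xs]) n" for n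
  have P0: "P 0 = []" and PS: "P (Suc n) = P n @ [nxt (P n)]" for n by (simp_all add: P_def)
  define m where "m n = nxt (P n)" for n
  have lenP: "length (P n) = n" for n by (induct n) (simp_all add: P0 PS)
  have Pnth: "i < n \<Longrightarrow> P n ! i = m i" for i n
    by (induct n) (auto simp: P0 PS m_def nth_append less_Suc_eq lenP)
  have ext0: "ext []"
  proof -
    have "bad f" unfolding bad_def using nf fA by blast
    then show ?thesis unfolding ext_def by auto
  qed
  have extP: "ext (P n)" for n
    by (induct n) (simp_all add: P0 PS ext0 nxt)
  have minm: "ext (P n @ [w]) \<Longrightarrow> length (m n) \<le> length w" for n w
    using nxt[OF extP[of n]] by (simp add: m_def)
  have extPm: "\<exists>g. bad g \<and> (\<forall>i\<le>n. g i = m i)" for n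
  proof -
    from extP[of "Suc n"] obtain g where "bad g" "\<forall>i<Suc n. g i = P (Suc n) ! i"
      unfolding ext_def lenP by auto
    then show ?thesis using Pnth[of _ "Suc n"] by auto
  qed
  have mA: "m i \<in> lists A" for i
  proof -
    obtain g where "bad g" "\<forall>k\<le>i. g k = m k" using extPm[of i] by blast
    then show ?thesis unfolding bad_def by (metis order_refl)
  qed
  have mbad: "\<not> subseq (m i) (m j)" if "i < j" for i j
  proof -
    obtain g where "bad g" "\<forall>k\<le>j. g k = m k" using extPm[of j] by blast
    then show ?thesis using that unfolding bad_def by (metis less_imp_le order_refl)
  qed
  have mne: "m i \<noteq> []" for i
    using mbad[of i "Suc i"] by auto
  have hdA: "hd (m i) \<in> A" for i using mA[of i] mne[of i] by (cases "m i") auto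
  have "finite ((\<lambda>i. hd (m i)) ` UNIV)" using hdA finA by (meson finite_subset image_subsetI)
  then obtain i0 where "infinite {i. hd (m i) = hd (m i0)}"
    using pigeonhole_infinite[of "UNIV :: nat set" "\<lambda>i. hd (m i)"] by auto
  then obtain r :: "nat \<Rightarrow> nat" where r: "strict_mono r" "\<And>k. hd (m (r k)) = hd (m i0)"
    using infinite_enumerate by blast
  define g where "g i = (if i < r 0 then m i else tl (m (r (i - r 0))))" for i
  have "bad g"
    unfolding bad_def
  proof (intro conjI allI impI)
    fix i
    have "tl (m k) \<in> lists A" for k using mA[of k] by (cases "m k") auto
    then show "g i \<in> lists A" using mA unfolding g_def by auto
  next
    fix i j :: nat assume ij: "i < j"
    show "\<not> subseq (g i) (g j)"
    proof (cases "j < r 0")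
      case True then show ?thesis using ij mbad by (simp add: g_def)
    next
      case False
      note jF = False
      have rj: "r 0 \<le> r (j - r 0)" using r(1) by (simp add: strict_mono_less_eq)
      show ?thesis
      proof (cases "i < r 0")
        case True
        have "\<not> subseq (m i) (m (r (j - r 0)))" using True rj by (intro mbad) simp
        moreover have "subseq (tl (m (r (j - r 0)))) (m (r (j - r 0)))"
          by (cases "m (r (j - r 0))") auto
        ultimately show ?thesis using True jF by (auto simp: g_def dest: subseq_order.trans)
      next
        case False
        have lt: "r (i - r 0) < r (j - r 0)" using r(1) False ij jF by (simp add: strict_mono_less)
        have "\<not> subseq (m (r (i - r 0))) (m (r (j - r 0)))" using lt by (intro mbad)
        moreover have "m (r (i - r 0)) = hd (m i0) # tl (m (r (i - r 0)))"
          using r(2) mne by (metis list.collapse)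
        moreover have "m (r (j - r 0)) = hd (m i0) # tl (m (r (j - r 0)))"
          using r(2) mne by (metis list.collapse)
        ultimately show ?thesis using False jF by (auto simp: g_def) (metis list_emb_Cons2)
      qed
    qed
  qed
  then have "ext (P (r 0) @ [tl (m (r 0))])"
    unfolding ext_def
    by (intro exI[of _ g]) (auto simp: g_def nth_append lenP Pnth less_Suc_eq)
  from minm[OF this] mne[of "r 0"] show False by (cases "m (r 0)") auto
qed


definition Ps :: "'a::monoid_add list \<Rightarrow> nat \<Rightarrow> 'a" where
  "Ps t j = sum_list (take j t)"

lemma Ps_seg: "a \<le> b \<Longrightarrow> Ps t b = Ps t a + seg_sum t a b"
proof -
  assume "a \<le> b"
  then have "take b t = take a t @ take (b - a) (drop a t)"
    by (metis le_add_diff_inverse take_add)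
  then show ?thesis by (simp add: Ps_def seg_sum_def)
qed

lemma Ps_Suc: "j < length t \<Longrightarrow> Ps t (Suc j) = Ps t j + t ! j"
  by (simp add: Ps_def take_Suc_conv_app_nth)

lemma sw_less: "sorted_wrt (<) xs \<Longrightarrow> i < j \<Longrightarrow> j < length xs \<Longrightarrow> xs ! i < (xs ! j :: nat)"
  by (simp add: sorted_wrt_iff_nth_less)

lemma hom_D:
  assumes "phi \<in> elt_hom s t"
  shows "length phi = Suc (length s)" "sorted_wrt (<) phi" "phi ! 0 = 0"
    "phi ! length s = length t" "\<And>i. i < length s \<Longrightarrow> s ! i = seg_sum t (phi ! i) (phi ! Suc i)"
  using assms by (auto simp: elt_hom_def)

lemma hom_mono:
  assumes "phi \<in> elt_hom s t" "i \<le> j" "j \<le> length s"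
  shows "phi ! i \<le> phi ! j"
proof (cases "i = j")
  case False
  then show ?thesis using assms hom_D[OF assms(1)] sw_less[of phi i j] by simp
qed simp

lemma hom_bound:
  assumes "phi \<in> elt_hom s t" "i \<le> length s"
  shows "phi ! i \<le> length t"
  using hom_mono[OF assms(1) assms(2) order_refl] hom_D[OF assms(1)] by simp

lemma hom_set_bound:
  assumes "phi \<in> elt_hom s t" "x \<in> set phi"
  shows "x \<le> length t"
  using assms hom_bound hom_D(1)[OF assms(1)] by (metis in_set_conv_nth less_Suc_eq_le)

lemma hom_prefix:
  assumes "phi \<in> elt_hom s t" 
  shows "i \<le> length s \<Longrightarrow> Ps s i = Ps t (phi ! i)"
proof (induct i)
  case 0
  then show ?case using hom_D[OF assms] by (simp add: Ps_def)
next
  case (Suc i)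
  then have "Ps s (Suc i) = Ps s i + s ! i" by (simp add: Ps_Suc)
  also have "\<dots> = Ps t (phi ! i) + seg_sum t (phi ! i) (phi ! Suc i)"
    using Suc hom_D(5)[OF assms, of i] by simp
  also have "\<dots> = Ps t (phi ! Suc i)"
    using Suc hom_mono[OF assms, of i "Suc i"] by (simp add: Ps_seg)
  finally show ?case .
qed

lemma prefix_hom:
  fixes s t :: "'a::cancel_comm_monoid_add list"
  assumes "length phi = Suc (length s)" "sorted_wrt (<) phi" "phi ! 0 = 0"
    "phi ! length s = length t" "\<And>i. i \<le> length s \<Longrightarrow> Ps s i = Ps t (phi ! i)"
  shows "phi \<in> elt_hom s t"
proof -
  have "s ! i = seg_sum t (phi ! i) (phi ! Suc i)" if i: "i < length s" for i
  proof -
    have le: "phi ! i \<le> phi ! Suc i"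
      using assms(1,2) i sw_less[of phi i "Suc i"] by simp
    have "Ps s i + s ! i = Ps s (Suc i)" using i by (simp add: Ps_Suc)
    also have "\<dots> = Ps t (phi ! Suc i)" using assms(5) i by simp
    also have "\<dots> = Ps t (phi ! i) + seg_sum t (phi ! i) (phi ! Suc i)" using le by (simp add: Ps_seg)
    also have "\<dots> = Ps s i + seg_sum t (phi ! i) (phi ! Suc i)" using assms(5) i by simp
    finally show ?thesis by simp
  qed
  then show ?thesis using assms by (simp add: elt_hom_def)
qed

lemma comp_hom:
  fixes s t u :: "'a::cancel_comm_monoid_add list"
  assumes f: "f \<in> elt_hom s t" and g: "g \<in> elt_hom t u"
  shows "elt_comp g f \<in> elt_hom s u"
proof (rule prefix_hom)
  note F = hom_D[OF f] and G = hom_D[OF g]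
  show "length (elt_comp g f) = Suc (length s)" using F by (simp add: elt_comp_def)
  show "sorted_wrt (<) (elt_comp g f)"
    unfolding elt_comp_def sorted_wrt_iff_nth_less
  proof (intro allI impI)
    fix i j assume ij: "i < j" "j < length (map ((!) g) f)"
    have "f ! i < f ! j" using F ij sw_less[of f i j] by simp
    moreover have "f ! j \<le> length t" using hom_bound[OF f] ij F by simp
    ultimately have "g ! (f ! i) < g ! (f ! j)" using G sw_less[of g "f ! i" "f ! j"] by simp
    then show "map ((!) g) f ! i < map ((!) g) f ! j" using ij by simp
  qed
  show "elt_comp g f ! 0 = 0" using F G by (simp add: elt_comp_def)
  show "elt_comp g f ! length s = length u" using F G by (simp add: elt_comp_def)
  fix i assume i: "i \<le> length s"
  have "Ps s i = Ps t (f ! i)" using hom_prefix[OF f i] .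
  also have "\<dots> = Ps u (g ! (f ! i))" using hom_prefix[OF g hom_bound[OF f i]] .
  finally show "Ps s i = Ps u (elt_comp g f ! i)" using i F by (simp add: elt_comp_def)
qed

lemma hom_finite: "finite (elt_hom s t)"
proof -
  have "elt_hom s t \<subseteq> {xs. set xs \<subseteq> {..length t} \<and> length xs = Suc (length s)}"
    using hom_set_bound hom_D(1) by fastforce
  then show ?thesis using finite_lists_length_eq[of "{..length t}"] finite_subset by blast
qed

lemma lexord_map:
  "(xs, ys) \<in> lexord r \<Longrightarrow> (\<forall>x\<in>set xs. \<forall>y\<in>set ys. (x, y) \<in> r \<longrightarrow> (F x, F y) \<in> r') \<Longrightarrow>
   (map F xs, map F ys) \<in> lexord r'"
proof (induct xs arbitrary: ys)
  case Nil then show ?case by (cases ys) auto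
next
  case (Cons x xs) then show ?case by (cases ys) auto
qed

lemma emb_idx:
  "list_emb P xs ys \<Longrightarrow> \<exists>\<rho>. (\<forall>i<length xs. \<rho> i < length ys \<and> P (xs ! i) (ys ! (\<rho> i))) \<and>
     (\<forall>i j. i < j \<longrightarrow> j < length xs \<longrightarrow> \<rho> i < \<rho> j)"
proof (induct rule: list_emb.induct)
  case (list_emb_Nil ys)
  then show ?case by simp
next
  case (list_emb_Cons xs ys y)
  then obtain \<rho> where r: "\<forall>i<length xs. \<rho> i < length ys \<and> P (xs ! i) (ys ! (\<rho> i))"
    "\<forall>i j. i < j \<longrightarrow> j < length xs \<longrightarrow> \<rho> i < \<rho> j" by blast
  show ?case using r by (intro exI[of _ "\<lambda>i. Suc (\<rho> i)"]) auto
next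
  case (list_emb_Cons2 x y xs ys)
  then obtain \<rho> where r: "\<forall>i<length xs. \<rho> i < length ys \<and> P (xs ! i) (ys ! (\<rho> i))"
    "\<forall>i j. i < j \<longrightarrow> j < length xs \<longrightarrow> \<rho> i < \<rho> j" by blast
  define \<sigma> where "\<sigma> i = (case i of 0 \<Rightarrow> 0 | Suc k \<Rightarrow> Suc (\<rho> k))" for i
  have "\<forall>i<length (x # xs). \<sigma> i < length (y # ys) \<and> P ((x # xs) ! i) ((y # ys) ! (\<sigma> i))"
    using r list_emb_Cons2 by (auto simp: \<sigma>_def split: nat.split)
  moreover have "\<forall>i j. i < j \<longrightarrow> j < length (x # xs) \<longrightarrow> \<sigma> i < \<sigma> j"
    using r by (auto simp: \<sigma>_def split: nat.split)
  ultimately show ?case by blast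
qed

definition enc :: "'a::monoid_add list \<Rightarrow> nat list \<Rightarrow> ('a \<times> nat \<times> bool) list" where
  "enc t f = map (\<lambda>j. (Ps t (Suc j), card {i. i < length f \<and> f ! i < Suc j}, Suc j \<in> set f)) [0..<length t]"

lemma enc_len[simp]: "length (enc t f) = length t"
  by (simp add: enc_def)

lemma enc_nth: "j < length t \<Longrightarrow> enc t f ! j = (Ps t (Suc j), card {i. i < length f \<and> f ! i < Suc j}, Suc j \<in> set f)"
  by (simp add: enc_def)

lemma enc_lists: "enc t f \<in> lists (UNIV \<times> {..length f} \<times> UNIV)"
proof -
  have "card {i. i < length f \<and> f ! i < Suc j} \<le> length f" for j
    using card_mono[of "{..<length f}" "{i. i < length f \<and> f ! i < Suc j}"] by auto
  then show ?thesis by (auto simp: enc_def)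
qed

lemma card_below:
  fixes f :: "nat list"
  assumes "sorted_wrt (<) f" "k < length f"
  shows "card {i. i < length f \<and> f ! i < f ! k} = k"
proof -
  have "{i. i < length f \<and> f ! i < f ! k} = {..<k}"
  proof (intro set_eqI iffI)
    fix i assume "i \<in> {i. i < length f \<and> f ! i < f ! k}"
    then show "i \<in> {..<k}" using assms sw_less[of f k i] by (cases "k < i") (auto simp: not_less le_less)
  next
    fix i assume "i \<in> {..<k}"
    then show "i \<in> {i. i < length f \<and> f ! i < f ! k}" using assms sw_less[of f i k] by auto
  qed
  then show ?thesis by simp
qed

lemma enc_emb:
  fixes s t1 t2 :: "'a::cancel_comm_monoid_add list"
  assumes f1: "f1 \<in> elt_hom s t1" and f2: "f2 \<in> elt_hom s t2"
    and e: "subseq (enc t1 f1) (enc t2 f2)"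
  shows "\<exists>h\<in>elt_hom t1 t2. f2 = elt_comp h f1"
proof -
  note F1 = hom_D[OF f1] and F2 = hom_D[OF f2]
  obtain \<rho> where r: "\<forall>i<length t1. \<rho> i < length t2 \<and> enc t1 f1 ! i = enc t2 f2 ! (\<rho> i)"
    "\<forall>i j. i < j \<longrightarrow> j < length t1 \<longrightarrow> \<rho> i < \<rho> j"
    using emb_idx[OF e] by auto
  have A: "Ps t1 (Suc j) = Ps t2 (Suc (\<rho> j))"
    and B: "card {i. i < Suc (length s) \<and> f1 ! i < Suc j} = card {i. i < Suc (length s) \<and> f2 ! i < Suc (\<rho> j)}"
    and C: "(Suc j \<in> set f1) = (Suc (\<rho> j) \<in> set f2)"
    if j: "j < length t1" for j
    using r(1) j enc_nth[of j t1 f1] enc_nth[of "\<rho> j" t2 f2] F1(1) F2(1) by auto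
  define h where "h = 0 # map (\<lambda>j. Suc (\<rho> j)) [0..<length t1]"
  have h0: "h ! 0 = 0" by (simp add: h_def)
  have hS: "j < length t1 \<Longrightarrow> h ! Suc j = Suc (\<rho> j)" for j by (simp add: h_def)
  have key: "h ! (f1 ! k) = f2 ! k" if k: "k \<le> length s" for k
  proof (cases "k = 0")
    case True then show ?thesis using F1 F2 h0 by simp
  next
    case False
    then have "f1 ! 0 < f1 ! k" using F1 k sw_less[of f1 0 k] by simp
    then obtain j where j: "f1 ! k = Suc j" using F1 by (cases "f1 ! k") auto
    have jl: "j < length t1" using hom_bound[OF f1 k] j by simp
    have "Suc j \<in> set f1" using j k F1 by (metis le_imp_less_Suc nth_mem)
    then have "Suc (\<rho> j) \<in> set f2" using C[OF jl] by simp
    then obtain k' where k': "k' < Suc (length s)" "f2 ! k' = Suc (\<rho> j)"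
      using F2(1) by (metis in_set_conv_nth)
    have "k = card {i. i < Suc (length s) \<and> f1 ! i < f1 ! k}"
      using card_below[of f1 k] F1 k by simp
    also have "\<dots> = card {i. i < Suc (length s) \<and> f2 ! i < f2 ! k'}"
      using B[OF jl] j k' by simp
    also have "\<dots> = k'" using card_below[of f2 k'] F2 k' by simp
    finally show ?thesis using j k' hS[OF jl] by simp
  qed
  have hhom: "h \<in> elt_hom t1 t2"
  proof (rule prefix_hom)
    show "length h = Suc (length t1)" by (simp add: h_def)
    have "sorted_wrt (<) (map (\<lambda>j. Suc (\<rho> j)) [0..<length t1])"
      unfolding sorted_wrt_iff_nth_less using r(2) by auto
    then show "sorted_wrt (<) h" by (simp add: h_def)
    show "h ! 0 = 0" by (rule h0)
    show "h ! length t1 = length t2" using key[of "length s"] F1 F2 by simp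
    fix j assume j: "j \<le> length t1"
    show "Ps t1 j = Ps t2 (h ! j)"
    proof (cases j)
      case 0 then show ?thesis by (simp add: Ps_def h0)
    next
      case (Suc j') then show ?thesis using j A[of j'] hS[of j'] by simp
    qed
  qed
  have "f2 = elt_comp h f1"
    by (rule nth_equalityI) (use F1 F2 key in \<open>auto simp: elt_comp_def\<close>)
  with hhom show ?thesis by blast
qed

lemma wo_finite:
  fixes H :: "'b::linorder set"
  assumes "finite H"
  shows "well_order_on H {(x, y). x \<in> H \<and> y \<in> H \<and> x \<le> y}"
proof -
  let ?r = "{(x, y). x \<in> H \<and> y \<in> H \<and> x \<le> y}"
  let ?L = "{(x, y). x \<in> H \<and> y \<in> H \<and> x < y}"
  have "trans ?L" by (auto simp: trans_def)
  then have "?L\<^sup>+ = ?L" by (rule trancl_id)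
  then have "acyclic ?L" by (auto simp: acyclic_def)
  moreover have "finite ?L" using assms finite_subset[of ?L "H \<times> H"] by auto
  ultimately have "wf ?L" by (rule finite_acyclic_wf[rotated])
  then have "wf (?r - Id)" by (rule wf_subset) auto
  then show ?thesis
    unfolding well_order_on_def linear_order_on_def partial_order_on_def preorder_on_def
      refl_on_def trans_def antisym_def total_on_def
    by auto
qed

theorem proposition5p13:
  shows "groebner_cat (elt_obj :: 2 list set) elt_hom elt_comp"
  unfolding groebner_cat_def
proof (intro ballI conjI)
  fix c :: "2 list" assume c: "c \<in> elt_obj"
  define R where "R c' = {(x, y). x \<in> elt_hom c c' \<and> y \<in> elt_hom c c' \<and> x \<le> y}" for c' :: "2 list"
  have "admissible_order elt_obj elt_hom elt_comp c R"
    unfolding admissible_order_def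
  proof (intro conjI ballI impI)
    fix c' :: "2 list"
    show "well_order_on (elt_hom c c') (R c')" unfolding R_def by (rule wo_finite[OF hom_finite])
  next
    fix c' c'' :: "2 list" and f f' g
    assume f: "f \<in> elt_hom c c'" and f': "f' \<in> elt_hom c c'" and g: "g \<in> elt_hom c' c''"
      and ff: "(f, f') \<in> R c' \<and> f \<noteq> f'"
    then have lt: "f < f'" by (auto simp: R_def)
    have "(map ((!) g) f, map ((!) g) f') \<in> lexord {(u, v). u < v}"
    proof (rule lexord_map)
      show "(f, f') \<in> lexord {(u, v). u < v}" using lt by (simp add: list_less_def)
      show "\<forall>x\<in>set f. \<forall>y\<in>set f'. (x, y) \<in> {(u, v). u < v} \<longrightarrow> (g ! x, g ! y) \<in> {(u, v). u < v}"
      proof (intro ballI impI)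
        fix x y assume "x \<in> set f" "y \<in> set f'" "(x, y) \<in> {(u, v). u < v}"
        moreover have "y \<le> length c'" using hom_set_bound[OF f'] \<open>y \<in> set f'\<close> by simp
        ultimately show "(g ! x, g ! y) \<in> {(u, v). u < v}"
          using hom_D[OF g] sw_less[of g x y] by simp
      qed
    qed
    then have "elt_comp g f < elt_comp g f'" by (simp add: list_less_def elt_comp_def)
    then show "(elt_comp g f, elt_comp g f') \<in> R c''"
      using comp_hom[OF f g] comp_hom[OF f' g] by (auto simp: R_def)
    show "elt_comp g f \<noteq> elt_comp g f'" using \<open>elt_comp g f < elt_comp g f'\<close> by auto
  qed
  then show "\<exists>R. admissible_order elt_obj elt_hom elt_comp c R" by blast
next
  fix c :: "2 list" assume c: "c \<in> elt_obj"
  show "noetherian_on (out_mor elt_obj elt_hom c) (under_le elt_hom elt_comp)"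
    unfolding noetherian_on_def
  proof (intro allI impI)
    fix x :: "nat \<Rightarrow> 2 list \<times> nat list"
    assume x: "\<forall>i. x i \<in> out_mor elt_obj elt_hom c"
    have xh: "snd (x i) \<in> elt_hom c (fst (x i))" for i
      using x[rule_format, of i] by (cases "x i") (auto simp: out_mor_def)
    let ?A = "(UNIV :: 2 set) \<times> {..Suc (length c)} \<times> (UNIV :: bool set)"
    have "enc (fst (x i)) (snd (x i)) \<in> lists ?A" for i
      using enc_lists[of "fst (x i)" "snd (x i)"] hom_D(1)[OF xh[of i]] by simp
    moreover have "finite ?A" by simp
    ultimately obtain i j where ij: "i < j" "subseq (enc (fst (x i)) (snd (x i))) (enc (fst (x j)) (snd (x j)))"
      using higman[of ?A "\<lambda>i. enc (fst (x i)) (snd (x i))"] by blast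
    from enc_emb[OF xh[of i] xh[of j] ij(2)]
    have "under_le elt_hom elt_comp (x i) (x j)" by (simp add: under_le_def)
    then show "\<exists>i j. i < j \<and> under_le elt_hom elt_comp (x i) (x j)" using ij(1) by blast
  qed
qed

end
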